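(* Let $X_1,X_2,\dots$ be iid with continuous distribution function $F\in\mathcal{D}(G)$ with norming constants $a_n>0$, $b_n\in\mathbb{R}$. Let $j=j(n)<k=k(n)$ be integers with $j/n\to\lambda_1>0$ and $k/n\to\lambda_2>\lambda_1$, and put $\beta_i=\lambda_i/(\lambda_2-\lambda_1)$, $i=1,2$. Then for all $y_1,y_2\in\mathbb{R}$, \[ \lim_{n\to\infty}\Pr\left(\frac{X_j-b_n}{a_n}\le y_1,\ \frac{X_k-b_n}{a_n}\le y_2\ \Big|\ X_j\text{ and }X_k\text{ are records}\right)=G_{\lambda_1,\lambda_2}(y_1,y_2), \] where \[ G_{\lambda_1,\lambda_2}(y_1,y_2)=\begin{cases} G(y_1)^{\lambda_1}\left(\beta_2G(y_2)^{\lambda_2-\lambda_1}-\beta_1G(y_1)^{\lambda_2-\lambda_1}\right), & \text{if } y_1<y_2,\\ G(y_2)^{\lambda_2}, & \text{if } y_1\ge y_2. \end{cases} \]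
   Context: $X_m$ is a record if $X_m>\max(X_1,\dots,X_{m-1})$; $X_1$ is always a record. $F\in\mathcal{D}(G)$ means $F^n(a_nx+b_n)\to G(x)$ as $n\to\infty$ for all $x$, where $G$ is a non-degenerate (hence continuous, extreme value) distribution function. *)

theory Defs
  imports "HOL-Probability.Probability"
begin

text \<open>X m is a record (at outcome w) if it exceeds all of X 1, ..., X (m-1);
  indices start at 1, so X 1 is always a record.\<close>
definition is_record :: "(nat \<Rightarrow> 'a \<Rightarrow> real) \<Rightarrow> nat \<Rightarrow> 'a \<Rightarrow> bool" where
  "is_record X m w \<longleftrightarrow> (\<forall>i\<in>{1..<m}. X i w < X m w)"

definition distribution_function :: "(real \<Rightarrow> real) \<Rightarrow> bool" where
  "distribution_function G \<longleftrightarrow> mono G \<and> (G \<longlongrightarrow> 0) at_bot \<and> (G \<longlongrightarrow> 1) at_top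
     \<and> (\<forall>x. continuous (at_right x) G)"

definition nondegenerate :: "(real \<Rightarrow> real) \<Rightarrow> bool" where
  "nondegenerate G \<longleftrightarrow> (\<exists>x. 0 < G x \<and> G x < 1)"

definition max_domain_attr ::
    "(real \<Rightarrow> real) \<Rightarrow> (real \<Rightarrow> real) \<Rightarrow> (nat \<Rightarrow> real) \<Rightarrow> (nat \<Rightarrow> real) \<Rightarrow> bool" where
  "max_domain_attr F G a b \<longleftrightarrow> distribution_function G \<and> nondegenerate G \<and> (\<forall>n. a n > 0)
     \<and> (\<forall>x. (\<lambda>n. F (a n * x + b n) ^ n) \<longlonglongrightarrow> G x)"

definition G_lam :: "(real \<Rightarrow> real) \<Rightarrow> real \<Rightarrow> real \<Rightarrow> real \<Rightarrow> real \<Rightarrow> real" where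
  "G_lam G l1 l2 y1 y2 =
     (let b1 = l1 / (l2 - l1); b2 = l2 / (l2 - l1) in
      if y1 < y2 then G y1 powr l1 * (b2 * G y2 powr (l2 - l1) - b1 * G y1 powr (l2 - l1))
      else G y2 powr l2)"

end

theory Submission
  imports Defs
begin

definition amax :: "nat set \<Rightarrow> nat \<Rightarrow> (nat \<Rightarrow> real) \<Rightarrow> bool" where
  "amax S i x \<longleftrightarrow> (\<forall>l\<in>S-{i}. x l < x i)"

definition good :: "nat set \<Rightarrow> ((nat \<Rightarrow> real) \<Rightarrow> bool) \<Rightarrow> bool" where
  "good I Q \<longleftrightarrow> Measurable.pred (PiM I (\<lambda>_. borel)) Q \<and> (\<forall>x. Q x = Q (restrict x I))"

lemma good_less: "l \<in> I \<Longrightarrow> m \<in> I \<Longrightarrow> good I (\<lambda>x. x l < x m)"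
  unfolding good_def by (auto intro!: pred_intros_logic measurable_component_singleton)

lemma good_le: "l \<in> I \<Longrightarrow> good I (\<lambda>x. x l \<le> c)"
  unfolding good_def by (auto intro!: measurable_component_singleton)

lemma good_true: "good I (\<lambda>x. True)"
  unfolding good_def by auto

lemma good_conj: "good I P \<Longrightarrow> good I Q \<Longrightarrow> good I (\<lambda>x. P x \<and> Q x)"
  unfolding good_def by auto

lemma good_ball: assumes "finite L" "\<And>l. l \<in> L \<Longrightarrow> good I (P l)"
  shows "good I (\<lambda>x. \<forall>l\<in>L. P l x)"
proof -
  have "Measurable.pred (PiM I (\<lambda>_. borel)) (\<lambda>x. \<forall>l\<in>L. P l x)"
  proof (rule pred_intros_finite[OF assms(1)])
    fix l assume "l \<in> L"
    thus "Measurable.pred (PiM I (\<lambda>_. borel)) (\<lambda>x. P l x)" using assms(2) unfolding good_def by blast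
  qed
  moreover have "(\<forall>l\<in>L. P l x) = (\<forall>l\<in>L. P l (restrict x I))" for x
    using assms(2) unfolding good_def by blast
  ultimately show ?thesis unfolding good_def by blast
qed

lemma good_amax: "finite S \<Longrightarrow> S \<subseteq> I \<Longrightarrow> i \<in> I \<Longrightarrow> good I (amax S i)"
  unfolding amax_def[abs_def]
proof (rule good_ball)
  fix l assume "finite S" "S \<subseteq> I" "i \<in> I" "l \<in> S - {i}"
  thus "good I (\<lambda>x. x l < x i)" by (intro good_less) auto
qed simp

lemma amax_perm: assumes "\<sigma> permutes S" shows "amax S i (x \<circ> \<sigma>) = amax S (\<sigma> i) x"
proof -
  have "(\<forall>l\<in>S-{i}. x (\<sigma> l) < x (\<sigma> i)) \<longleftrightarrow> (\<forall>l\<in>S-{\<sigma> i}. x l < x (\<sigma> i))"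
  proof (intro iffI ballI)
    fix l assume h: "\<forall>l\<in>S-{i}. x (\<sigma> l) < x (\<sigma> i)" and l: "l \<in> S-{\<sigma> i}"
    define l' where "l' = inv \<sigma> l"
    have e: "\<sigma> l' = l" unfolding l'_def using permutes_inverses(1)[OF assms] .
    have "l' \<in> S" unfolding l'_def using assms l by (simp add: permutes_in_image permutes_inv)
    moreover have "l' \<noteq> i" using l e by auto
    ultimately have "x (\<sigma> l') < x (\<sigma> i)" using h by simp
    thus "x l < x (\<sigma> i)" using e by simp
  next
    fix l assume h: "\<forall>l\<in>S-{\<sigma> i}. x l < x (\<sigma> i)" and l: "l \<in> S-{i}"
    have "\<sigma> l \<in> S" using l assms by (simp add: permutes_in_image)
    moreover have "\<sigma> l \<noteq> \<sigma> i" using l permutes_inj[OF assms] by (auto dest: injD)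
    ultimately show "x (\<sigma> l) < x (\<sigma> i)" using h by simp
  qed
  thus ?thesis by (simp add: amax_def)
qed

lemma alg: fixes A B j k d :: real assumes "j>0" "k>0" "d>0"
  shows "(A - j*B/k)/(d*j) / (1/(j*k)) = (k*A - j*B)/d"
  using assms by (simp add: field_simps)

lemma alg2: fixes C j k d :: real assumes "j>0" "k>0" "d>0" "d = k - j"
  shows "(C - j*C/k)/(d*j) / (1/(j*k)) = C"
proof -
  have "k*C - j*C = d*C" unfolding assms(4) by (simp add: left_diff_distrib)
  thus ?thesis using alg[OF assms(1-3), of C C] assms(3) by simp
qed

locale recsetup = prob_space +
  fixes X :: "nat \<Rightarrow> 'a \<Rightarrow> real" and F :: "real \<Rightarrow> real"
  assumes rv: "\<And>i. i \<ge> 1 \<Longrightarrow> X i \<in> borel_measurable M"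
  and ind: "indep_vars (\<lambda>_. borel) X {1..}"
  and cdfF: "\<And>i x. i \<ge> 1 \<Longrightarrow> F x = prob {w \<in> space M. X i w \<le> x}"
  and contF: "continuous_on UNIV F"
begin

definition "D = distr M borel (X 1)"

lemma cdf_i: assumes "i \<ge> 1" shows "cdf (distr M borel (X i)) x = F x"
  unfolding cdf_def using rv[OF assms] cdfF[OF assms]
  by (subst measure_distr) (auto intro!: arg_cong[where f=prob])

lemma distr_eq: assumes "i \<ge> 1" shows "distr M borel (X i) = D"
  unfolding D_def
proof (rule cdf_unique)
  show "cdf (distr M borel (X i)) = cdf (distr M borel (X 1))"
    using cdf_i[OF assms] cdf_i[of 1] by auto
qed (use assms rv in auto)

lemma atom: assumes "i \<ge> 1" shows "prob {w\<in>space M. X i w = t} = 0"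
proof -
  let ?p = "prob {w\<in>space M. X i w = t}"
  have meas: "{w\<in>space M. X i w \<le> s} \<in> events" for s using rv[OF assms] by measurable
  have le: "?p \<le> F t - F (t - 1/Suc n)" for n
  proof -
    have "F t - F (t - 1/Suc n) = prob ({w\<in>space M. X i w \<le> t} - {w\<in>space M. X i w \<le> t - 1/Suc n})"
    proof -
      have z: "0 \<le> 1/real (Suc n)" by simp
      have h: "x \<le> t - 1/real (Suc n) \<Longrightarrow> x \<le> t" for x using z by linarith
      hence "{w\<in>space M. X i w \<le> t - 1/Suc n} \<subseteq> {w\<in>space M. X i w \<le> t}" by (auto dest: h)
      thus ?thesis using cdfF[OF assms] meas by (subst finite_measure_Diff) auto
    qed
    also have "?p \<le> \<dots>"
    proof (intro finite_measure_mono)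
      have "0 < 1/real (Suc n)" by simp
      thus "{w \<in> space M. X i w = t} \<subseteq> {w \<in> space M. X i w \<le> t} - {w \<in> space M. X i w \<le> t - 1 / real (Suc n)}"
        by auto
    qed (use meas in auto)
    finally show ?thesis by simp
  qed
  have "(\<lambda>n. t - 1/Suc n) \<longlonglongrightarrow> t - 0"
    by (intro tendsto_intros LIMSEQ_inverse_real_of_nat[unfolded inverse_eq_divide])
  hence "(\<lambda>n. F (t - 1/Suc n)) \<longlonglongrightarrow> F t"
    using contF by (auto intro: continuous_on_tendsto_compose)
  hence "(\<lambda>n. F t - F (t - 1/Suc n)) \<longlonglongrightarrow> F t - F t"
    by (intro tendsto_diff tendsto_const)
  hence "?p \<le> F t - F t" using le by (intro LIMSEQ_le_const) auto
  thus ?thesis using measure_nonneg[of M "{w\<in>space M. X i w = t}"] by linarith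
qed

lemma D_prob: "prob_space D"
  unfolding D_def using rv[of 1] by (auto intro!: prob_space_distr)

lemma tie: assumes "l \<ge> 1" "m \<ge> 1" "l \<noteq> m" shows "prob {w\<in>space M. X l w = X m w} = 0"
proof -
  have iv0: "indep_var (PiM {l} (\<lambda>_. borel)) (\<lambda>\<omega>. restrict (\<lambda>i. X i \<omega>) {l})
      (PiM {m} (\<lambda>_. borel)) (\<lambda>\<omega>. restrict (\<lambda>i. X i \<omega>) {m})"
    using assms by (intro indep_var_restrict[OF ind]) auto
  have "indep_var borel ((\<lambda>f. f l) \<circ> (\<lambda>\<omega>. restrict (\<lambda>i. X i \<omega>) {l})) borel ((\<lambda>f. f m) \<circ> (\<lambda>\<omega>. restrict (\<lambda>i. X i \<omega>) {m}))"
    by (rule indep_var_compose[OF iv0]) (auto intro!: measurable_component_singleton)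
  hence iv: "indep_var borel (X l) borel (X m)" by (simp add: comp_def)
  hence eq: "D \<Otimes>\<^sub>M D = distr M (borel \<Otimes>\<^sub>M borel) (\<lambda>x. (X l x, X m x))"
  proof -
    have "distr M borel (X l) \<Otimes>\<^sub>M distr M borel (X m) = distr M (borel \<Otimes>\<^sub>M borel) (\<lambda>x. (X l x, X m x))"
      using iv indep_var_distribution_eq by blast
    thus ?thesis using distr_eq[OF assms(1)] distr_eq[OF assms(2)] by simp
  qed
  let ?Z = "{p::real\<times>real. fst p = snd p}"
  have "{p\<in>space (borel \<Otimes>\<^sub>M borel). fst p = (snd p::real)} \<in> sets (borel \<Otimes>\<^sub>M borel)" by measurable
  hence Zm: "?Z \<in> sets (borel \<Otimes>\<^sub>M borel)" by (simp add: space_pair_measure)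
  interpret D: prob_space D by (rule D_prob)
  have "emeasure (D \<Otimes>\<^sub>M D) ?Z = (\<integral>\<^sup>+x. emeasure D (Pair x -` ?Z) \<partial>D)"
  proof (intro D.emeasure_pair_measure_alt)
    have "sets (D \<Otimes>\<^sub>M D) = sets (borel \<Otimes>\<^sub>M borel)"
      by (rule sets_pair_measure_cong) (simp_all add: D_def)
    thus "?Z \<in> sets (D \<Otimes>\<^sub>M D)" using Zm by simp
  qed
  also have "\<dots> = (\<integral>\<^sup>+x. 0 \<partial>D)"
  proof (rule nn_integral_cong)
    fix x
    have "Pair x -` ?Z = {x}" by auto
    moreover have "emeasure D {x} = emeasure M {w\<in>space M. X 1 w = x}"
      unfolding D_def using rv[of 1] by (subst emeasure_distr) (auto intro!: arg_cong[where f="emeasure M"])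
    moreover have "emeasure M {w\<in>space M. X 1 w = x} = 0"
      using atom[of 1 x] rv[of 1] by (subst emeasure_eq_measure) auto
    ultimately show "emeasure D (Pair x -` ?Z) = 0" by simp
  qed
  finally have z: "emeasure (D \<Otimes>\<^sub>M D) ?Z = 0" by simp
  have "emeasure M {w\<in>space M. X l w = X m w} = emeasure (distr M (borel \<Otimes>\<^sub>M borel) (\<lambda>x. (X l x, X m x))) ?Z"
    using Zm rv assms by (subst emeasure_distr) (auto intro!: arg_cong[where f="emeasure M"])
  also have "\<dots> = 0" using z eq by simp
  finally show ?thesis by (simp add: measure_def)
qed

lemma exch:
  assumes I: "finite I" "I \<noteq> {}" "I \<subseteq> {1..}" and \<sigma>: "\<sigma> permutes I"
  and Qm: "{x\<in>space (PiM I (\<lambda>_. borel)). Q x} \<in> sets (PiM I (\<lambda>_. borel))"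
  and Qr: "\<And>x. Q x = Q (restrict x I)"
  shows "prob {w\<in>space M. Q (\<lambda>i. X (\<sigma> i) w)} = prob {w\<in>space M. Q (\<lambda>i. X i w)}"
proof -
  let ?P = "PiM I (\<lambda>_. borel::real measure)"
  let ?f = "\<lambda>w. \<lambda>i\<in>I. X i w"
  let ?g = "\<lambda>w. \<lambda>i\<in>I. X (\<sigma> i) w"
  let ?t = "\<lambda>\<omega>. \<lambda>n\<in>I. \<omega> (\<sigma> n)"
  let ?S = "{x\<in>space ?P. Q x}"
  have si: "\<sigma> i \<in> I" if "i \<in> I" for i using \<sigma> that by (simp add: permutes_in_image)
  have rvI: "i \<in> I \<Longrightarrow> X i \<in> borel_measurable M" for i using rv I(3) by auto
  have fm: "?f \<in> measurable M ?P" using rvI by (intro measurable_restrict) auto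
  have gm: "?g \<in> measurable M ?P" using rvI si by (intro measurable_restrict) auto
  have df: "distr M ?P ?f = PiM I (\<lambda>_. D)"
  proof -
    have "indep_vars (\<lambda>_. borel) X I" by (rule indep_vars_subset[OF ind I(3)])
    hence "distr M ?P ?f = PiM I (\<lambda>i. distr M borel (X i))"
      using indep_vars_iff_distr_eq_PiM'[where M'="\<lambda>_. borel" and X=X and I=I] I(2) rvI by simp
    also have "\<dots> = PiM I (\<lambda>_. D)" using I(3) distr_eq by (intro PiM_cong) auto
    finally show ?thesis .
  qed
  have tm: "?t \<in> measurable ?P ?P"
    using si by (intro measurable_restrict measurable_component_singleton) auto
  have g_eq: "?g w = ?t (?f w)" for w using si by (auto simp: fun_eq_iff)
  have sets_eq: "sets (PiM I (\<lambda>_. D)) = sets ?P" by (rule sets_PiM_cong) (auto simp: D_def)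
  have dg: "distr M ?P ?g = PiM I (\<lambda>_. D)"
  proof -
    have "distr M ?P ?g = distr M ?P (?t \<circ> ?f)" using g_eq by (simp add: comp_def)
    also have "\<dots> = distr (distr M ?P ?f) ?P ?t" using distr_distr[OF tm fm] by simp
    also have "\<dots> = distr (PiM I (\<lambda>_. D)) (PiM I (\<lambda>_. D)) ?t"
      using df sets_eq by (intro distr_cong) auto
    also have "\<dots> = PiM I (\<lambda>_. D)"
      using distr_PiM_reindex[of I "\<lambda>_. D" \<sigma> I] D_prob \<sigma> si by (auto simp: permutes_inj_on)
    finally show ?thesis .
  qed
  have "prob {w\<in>space M. Q (\<lambda>i. X (\<sigma> i) w)} = prob (?g -` ?S \<inter> space M)"
    using gm by (auto intro!: arg_cong[where f=prob] simp: Qr[of "\<lambda>i. X (\<sigma> i) _"] measurable_space space_PiM)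
  also have "\<dots> = measure (distr M ?P ?g) ?S" using gm Qm by (rule measure_distr[symmetric])
  also have "\<dots> = measure (distr M ?P ?f) ?S" using dg df by simp
  also have "\<dots> = prob (?f -` ?S \<inter> space M)" using fm Qm by (rule measure_distr)
  also have "\<dots> = prob {w\<in>space M. Q (\<lambda>i. X i w)}"
    using fm by (auto intro!: arg_cong[where f=prob] simp: Qr[of "\<lambda>i. X i _"] measurable_space space_PiM)
  finally show ?thesis .
qed

lemma ev_events: assumes "finite I" "I \<subseteq> {1..}" "good I Q"
  shows "{w\<in>space M. Q (\<lambda>i. X i w)} \<in> events"
proof -
  let ?P = "PiM I (\<lambda>_. borel::real measure)"
  let ?f = "\<lambda>w. \<lambda>i\<in>I. X i w"
  have fm: "?f \<in> measurable M ?P" using rv assms(2) by (intro measurable_restrict) auto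
  have Qr: "Q x = Q (restrict x I)" for x using assms(3) unfolding good_def by blast
  have "{w\<in>space M. Q (\<lambda>i. X i w)} = ?f -` {x\<in>space ?P. Q x} \<inter> space M"
    using measurable_space[OF fm] by (auto simp: Qr[of "\<lambda>i. X i _"])
  also have "\<dots> \<in> events" by (rule measurable_sets[OF fm]) (use assms(3) in \<open>simp add: good_def pred_def\<close>)
  finally show ?thesis .
qed

lemma tie_events: assumes "l \<ge> 1" "m \<ge> 1" shows "{w\<in>space M. X l w = X m w} \<in> events"
proof -
  note [measurable] = rv[OF assms(1)] rv[OF assms(2)]
  show ?thesis by measurable
qed

lemma swap_eq:
  assumes I: "finite I" "I \<noteq> {}" "I \<subseteq> {1..}" and S: "finite S" "S \<subseteq> I" "i \<in> S" "i' \<in> S"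
  and T: "good I T" "\<And>x. T (x \<circ> Transposition.transpose i i') = T x"
  shows "prob {w\<in>space M. T (\<lambda>l. X l w) \<and> amax S i (\<lambda>l. X l w)}
       = prob {w\<in>space M. T (\<lambda>l. X l w) \<and> amax S i' (\<lambda>l. X l w)}"
proof -
  let ?\<sigma> = "Transposition.transpose i i'"
  have \<sigma>: "?\<sigma> permutes S" using S by (intro permutes_swap_id) auto
  have \<sigma>I: "?\<sigma> permutes I" using permutes_subset[OF \<sigma> S(2)] .
  have g: "good I (\<lambda>x. T x \<and> amax S i x)"
    using S I T by (intro good_conj good_amax) auto
  have "prob {w\<in>space M. (\<lambda>x. T x \<and> amax S i x) (\<lambda>l. X (?\<sigma> l) w)}
      = prob {w\<in>space M. (\<lambda>x. T x \<and> amax S i x) (\<lambda>l. X l w)}"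
  proof (rule exch[OF I \<sigma>I])
    show "{x \<in> space (PiM I (\<lambda>_. borel)). T x \<and> amax S i x} \<in> sets (PiM I (\<lambda>_. borel))"
      using g unfolding good_def pred_def by blast
    show "(T x \<and> amax S i x) = (T (restrict x I) \<and> amax S i (restrict x I))" for x
      using g unfolding good_def by blast
  qed
  moreover have "(\<lambda>x. T x \<and> amax S i x) (\<lambda>l. X (?\<sigma> l) w) \<longleftrightarrow> T (\<lambda>l. X l w) \<and> amax S i' (\<lambda>l. X l w)" for w
  proof -
    have "(\<lambda>l. X (?\<sigma> l) w) = (\<lambda>l. X l w) \<circ> ?\<sigma>" by (simp add: comp_def)
    thus ?thesis using T(2) amax_perm[OF \<sigma>] by simp
  qed
  ultimately show ?thesis by simp
qed

lemma part:
  assumes I: "finite I" "I \<subseteq> {1..}" and S: "finite S" "S \<subseteq> I" "S \<noteq> {}"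
  and T: "good I T"
  shows "(\<Sum>i\<in>S. prob {w\<in>space M. T (\<lambda>l. X l w) \<and> amax S i (\<lambda>l. X l w)})
       = prob {w\<in>space M. T (\<lambda>l. X l w)}"
proof -
  define E where "E i = {w\<in>space M. T (\<lambda>l. X l w) \<and> amax S i (\<lambda>l. X l w)}" for i
  define TT where "TT = {w\<in>space M. T (\<lambda>l. X l w)}"
  define P where "P = Sigma S (\<lambda>l. S-{l})"
  define Z where "Z p = {w\<in>space M. X (fst p) w = X (snd p) w}" for p
  have Eev: "E i \<in> events" if "i \<in> S" for i
  proof -
    have "good I (\<lambda>x. T x \<and> amax S i x)" using S that by (intro good_conj[OF T] good_amax) auto
    from ev_events[OF I this] show ?thesis unfolding E_def .
  qed
  have Tev: "TT \<in> events" unfolding TT_def using I T by (intro ev_events)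
  have finP: "finite P" unfolding P_def using S by auto
  have Zev: "Z p \<in> events" if "p \<in> P" for p
    unfolding Z_def using that I S by (intro tie_events) (auto simp: P_def)
  have disj: "disjoint_family_on E S"
    unfolding disjoint_family_on_def E_def amax_def
  proof (intro ballI impI)
    fix m n assume mn: "m \<in> S" "n \<in> S" "m \<noteq> n"
    { fix w assume "\<forall>l\<in>S-{m}. X l w < X m w" "\<forall>l\<in>S-{n}. X l w < X n w"
      hence "X n w < X m w" "X m w < X n w" using mn by auto
      hence False by simp }
    thus "{w \<in> space M. T (\<lambda>l. X l w) \<and> (\<forall>l\<in>S - {m}. X l w < X m w)} \<inter>
          {w \<in> space M. T (\<lambda>l. X l w) \<and> (\<forall>l\<in>S - {n}. X l w < X n w)} = {}" by blast
  qed
  have U: "prob (\<Union>i\<in>S. E i) = (\<Sum>i\<in>S. prob (E i))"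
    using S Eev disj by (intro finite_measure_finite_Union) auto
  have Z0: "prob (\<Union>p\<in>P. Z p) = 0"
  proof -
    have "prob (\<Union>p\<in>P. Z p) \<le> (\<Sum>p\<in>P. prob (Z p))"
      using finP Zev by (intro finite_measure_subadditive_finite) auto
    also have "\<dots> = 0" unfolding Z_def
      using I S by (intro sum.neutral ballI tie) (auto simp: P_def)
    finally show ?thesis using measure_nonneg[of M] by (simp add: antisym)
  qed
  have sub1: "(\<Union>i\<in>S. E i) \<subseteq> TT" unfolding E_def TT_def by auto
  have sub2: "TT \<subseteq> (\<Union>i\<in>S. E i) \<union> (\<Union>p\<in>P. Z p)"
  proof
    fix w assume w: "w \<in> TT"
    show "w \<in> (\<Union>i\<in>S. E i) \<union> (\<Union>p\<in>P. Z p)"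
    proof (cases "w \<in> (\<Union>p\<in>P. Z p)")
      case False
      let ?x = "\<lambda>l. X l w"
      have "Max (?x ` S) \<in> ?x ` S" using S by (intro Max_in) auto
      then obtain i where i: "i \<in> S" "?x i = Max (?x ` S)" by (metis imageE)
      have "amax S i ?x" unfolding amax_def
      proof
        fix l assume l: "l \<in> S - {i}"
        have "?x l \<le> ?x i" using i l S by auto
        moreover have "?x l \<noteq> ?x i"
        proof
          assume eq: "?x l = ?x i"
          have "w \<in> Z (l, i)" using eq w unfolding Z_def TT_def by auto
          moreover have "(l, i) \<in> P" using l i unfolding P_def by auto
          ultimately show False using False by blast
        qed
        ultimately show "?x l < ?x i" by simp
      qed
      thus ?thesis using w i unfolding E_def TT_def by auto
    qed auto
  qed
  have "prob TT \<le> prob ((\<Union>i\<in>S. E i) \<union> (\<Union>p\<in>P. Z p))"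
    using sub2 Eev Zev S finP by (intro finite_measure_mono) auto
  also have "\<dots> \<le> prob (\<Union>i\<in>S. E i) + prob (\<Union>p\<in>P. Z p)"
    using Eev Zev S finP by (intro measure_subadditive) auto
  finally have "prob TT \<le> prob (\<Union>i\<in>S. E i)" using Z0 by simp
  moreover have "prob (\<Union>i\<in>S. E i) \<le> prob TT" using sub1 Tev by (intro finite_measure_mono)
  ultimately show ?thesis using U unfolding E_def TT_def by simp
qed

lemma sym_equal:
  assumes I: "finite I" "I \<noteq> {}" "I \<subseteq> {1..}" and S: "finite S" "S \<subseteq> I" "i0 \<in> S"
  and T: "good I T" "\<And>i x. i \<in> S \<Longrightarrow> T (x \<circ> Transposition.transpose i i0) = T x"
  shows "prob {w\<in>space M. T (\<lambda>l. X l w) \<and> amax S i0 (\<lambda>l. X l w)}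
       = prob {w\<in>space M. T (\<lambda>l. X l w)} / card S"
proof -
  let ?p = "\<lambda>i. prob {w\<in>space M. T (\<lambda>l. X l w) \<and> amax S i (\<lambda>l. X l w)}"
  have eq: "?p i = ?p i0" if "i \<in> S" for i using that by (intro swap_eq[OF I S(1,2) that S(3) T(1)] T(2))
  have "(\<Sum>i\<in>S. ?p i) = (\<Sum>i\<in>S. ?p i0)" by (intro sum.cong refl eq)
  hence "(\<Sum>i\<in>S. ?p i) = card S * ?p i0" by simp
  moreover have "(\<Sum>i\<in>S. ?p i) = prob {w\<in>space M. T (\<lambda>l. X l w)}"
    using S by (intro part[OF I(1,3) S(1,2) _ T(1)]) auto
  moreover have "card S > 0" using S by (auto simp: card_gt_0_iff)
  ultimately show ?thesis by (simp add: field_simps)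
qed

lemma ball_perm: assumes "\<sigma> permutes L" shows "(\<forall>l\<in>L. Q (\<sigma> l)) \<longleftrightarrow> (\<forall>l\<in>L. Q l)"
proof -
  have img: "\<sigma> ` L = L" using assms by (rule permutes_image)
  have "(\<forall>l\<in>\<sigma> ` L. Q l) \<longleftrightarrow> (\<forall>l\<in>L. Q (\<sigma> l))" by simp
  thus ?thesis using img by simp
qed

lemma prodF:
  assumes "J \<le> K"
  shows "prob {w\<in>space M. (\<forall>l\<in>{1..J}. X l w \<le> c1) \<and> (\<forall>l\<in>{Suc J..K}. X l w \<le> c2)}
       = F c1 ^ J * F c2 ^ (K - J)"
proof -
  define c where "c l = (if l \<le> J then c1 else c2)" for l
  define A where "A l = X l -` {..c l} \<inter> space M" for l
  have isets: "indep_sets (\<lambda>i. {X i -` A \<inter> space M | A. A \<in> sets borel}) {1..}"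
    using ind unfolding indep_vars_def2 by auto
  have pw: "((\<forall>l\<in>{1..J}. X l w \<le> c1) \<and> (\<forall>l\<in>{Suc J..K}. X l w \<le> c2)) \<longleftrightarrow> (\<forall>l\<in>{1..K}. X l w \<le> c l)" for w
  proof
    assume h: "(\<forall>l\<in>{1..J}. X l w \<le> c1) \<and> (\<forall>l\<in>{Suc J..K}. X l w \<le> c2)"
    show "\<forall>l\<in>{1..K}. X l w \<le> c l"
    proof
      fix l assume l: "l \<in> {1..K}"
      show "X l w \<le> c l"
      proof (cases "l \<le> J")
        case True thus ?thesis using h l by (auto simp: c_def)
      next
        case False thus ?thesis using h l by (auto simp: c_def)
      qed
    qed
  next
    assume h: "\<forall>l\<in>{1..K}. X l w \<le> c l"
    show "(\<forall>l\<in>{1..J}. X l w \<le> c1) \<and> (\<forall>l\<in>{Suc J..K}. X l w \<le> c2)"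
    proof (intro conjI ballI)
      fix l assume l: "l \<in> {1..J}"
      hence "l \<in> {1..K}" "c l = c1" using assms by (auto simp: c_def)
      thus "X l w \<le> c1" using h by metis
    next
      fix l assume l: "l \<in> {Suc J..K}"
      hence "l \<in> {1..K}" "c l = c2" using assms by (auto simp: c_def)
      thus "X l w \<le> c2" using h by metis
    qed
  qed
  have set_eq: "{w\<in>space M. (\<forall>l\<in>{1..J}. X l w \<le> c1) \<and> (\<forall>l\<in>{Suc J..K}. X l w \<le> c2)}
      = (if K = 0 then space M else \<Inter>l\<in>{1..K}. A l)"
  proof (cases "K = 0")
    case True thus ?thesis using assms by auto
  next
    case False
    hence "(\<Inter>l\<in>{1..K}. A l) = {w\<in>space M. \<forall>l\<in>{1..K}. X l w \<le> c l}"
      unfolding A_def by auto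
    thus ?thesis using False pw by simp
  qed
  show ?thesis
  proof (cases "K = 0")
    case True thus ?thesis using assms set_eq by (simp add: prob_space)
  next
    case False
    have Ain: "A l \<in> {X l -` B \<inter> space M | B. B \<in> sets borel}" for l
    proof -
      have "{..c l} \<in> sets borel" by simp
      thus ?thesis unfolding A_def by blast
    qed
    have "prob (\<Inter>l\<in>{1..K}. A l) = (\<Prod>l\<in>{1..K}. prob (A l))"
      using False Ain by (intro indep_setsD[OF isets]) auto
    also have "\<dots> = (\<Prod>l\<in>{1..K}. F (c l))"
      using cdfF by (intro prod.cong) (auto simp: A_def intro!: arg_cong[where f=prob])
    also have "\<dots> = (\<Prod>l\<in>{1..J}. F (c l)) * (\<Prod>l\<in>{Suc J..K}. F (c l))"
    proof -
      have "{1..K} = {1..J} \<union> {Suc J..K}" using assms by auto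
      thus ?thesis by (simp add: prod.union_disjoint ivl_disj_int)
    qed
    also have "\<dots> = F c1 ^ J * F c2 ^ (K - J)" unfolding c_def by simp
    finally show ?thesis using set_eq False by simp
  qed
qed

lemma den:
  assumes JK: "1 \<le> J" "J < K"
  shows "prob {w\<in>space M. amax {1..K} K (\<lambda>l. X l w) \<and> amax {1..J} J (\<lambda>l. X l w)} = 1 / (real J * real K)"
proof -
  have I: "finite {1..K}" "{1..K} \<noteq> {}" "{1..K} \<subseteq> {1..}" using JK by auto
  have "prob {w\<in>space M. (\<lambda>x. True) (\<lambda>l. X l w) \<and> amax {1..K} K (\<lambda>l. X l w)}
      = prob {w\<in>space M. (\<lambda>x. True) (\<lambda>l. X l w)} / card {1..K}"
    using JK by (intro sym_equal[OF I] good_true) auto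
  hence pK: "prob {w\<in>space M. amax {1..K} K (\<lambda>l. X l w)} = 1 / K" by (simp add: prob_space)
  have "prob {w\<in>space M. amax {1..K} K (\<lambda>l. X l w) \<and> amax {1..J} J (\<lambda>l. X l w)}
      = prob {w\<in>space M. amax {1..K} K (\<lambda>l. X l w)} / card {1..J}"
  proof (intro sym_equal[OF I] good_amax)
    fix i x assume i: "i \<in> {1..J}"
    have \<sigma>: "Transposition.transpose i J permutes {1..K}" using i JK by (intro permutes_swap_id) auto
    have "Transposition.transpose i J K = K" using i JK by auto
    thus "amax {1..K} K (x \<circ> Transposition.transpose i J) = amax {1..K} K x"
      using amax_perm[OF \<sigma>] by simp
  qed (use JK in auto)
  thus ?thesis using pK by simp
qed

lemma num:
  assumes JK: "1 \<le> J" "J < K" and c: "c1 \<le> c2"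
  shows "prob {w\<in>space M. ((\<forall>l\<in>{1..J}. X l w \<le> c1) \<and> (\<forall>l\<in>{Suc J..K}. X l w \<le> c2))
              \<and> amax {1..K} K (\<lambda>l. X l w) \<and> amax {1..J} J (\<lambda>l. X l w)}
       = (F c1 ^ J * F c2 ^ (K - J) - J * F c1 ^ K / K) / (real (K - J) * J)"
proof -
  define I where "I = {1..K}"
  have I: "finite I" "I \<noteq> {}" "I \<subseteq> {1..}" using JK by (auto simp: I_def)
  define T where "T x = ((\<forall>l\<in>{1..J}. x l \<le> c1) \<and> (\<forall>l\<in>{Suc J..K}. x l \<le> c2))" for x :: "nat \<Rightarrow> real"
  define T1 where "T1 x = ((\<forall>l\<in>{1..K}. x l \<le> c1) \<and> (\<forall>l\<in>{Suc K..K}. x l \<le> c2))" for x :: "nat \<Rightarrow> real"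
  have gT: "good I T" unfolding T_def[abs_def] I_def using JK
    by (intro good_conj good_ball good_le) auto
  have gT1: "good I T1" unfolding T1_def[abs_def] I_def using JK
    by (intro good_conj good_ball good_le) auto
  have PT: "prob {w\<in>space M. T (\<lambda>l. X l w)} = F c1 ^ J * F c2 ^ (K - J)"
    unfolding T_def using JK by (intro prodF) auto
  have PT1: "prob {w\<in>space M. T1 (\<lambda>l. X l w)} = F c1 ^ K"
    unfolding T1_def using prodF[of K K] by simp
  let ?p = "\<lambda>i. prob {w\<in>space M. T (\<lambda>l. X l w) \<and> amax I i (\<lambda>l. X l w)}"
  have q: "?p i = F c1 ^ K / K" if i: "i \<in> {1..J}" for i
  proof -
    have key: "(T x \<and> amax I i x) \<longleftrightarrow> (T1 x \<and> amax I i x)" for x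
    proof
      assume h: "T x \<and> amax I i x"
      have xi: "x i \<le> c1" using h i unfolding T_def by auto
      have "x l \<le> c1" if l: "l \<in> {1..K}" for l
      proof (cases "l = i")
        case False
        hence "x l < x i" using h l unfolding amax_def I_def by auto
        thus ?thesis using xi by simp
      qed (use xi in simp)
      thus "T1 x \<and> amax I i x" using h unfolding T1_def by auto
    next
      assume h: "T1 x \<and> amax I i x"
      have h1: "x l \<le> c1" if "l \<in> {1..K}" for l using h that unfolding T1_def by auto
      have "x l \<le> c2" if "l \<in> {Suc J..K}" for l
      proof -
        have "l \<in> {1..K}" using that by auto
        thus ?thesis using h1 c by force
      qed
      moreover have "x l \<le> c1" if "l \<in> {1..J}" for l
      proof -
        have "l \<in> {1..K}" using that JK by auto
        thus ?thesis using h1 by blast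
      qed
      ultimately show "T x \<and> amax I i x" using h unfolding T_def by auto
    qed
    have "?p i = prob {w\<in>space M. T1 (\<lambda>l. X l w) \<and> amax I i (\<lambda>l. X l w)}"
      using key by simp
    also have "\<dots> = prob {w\<in>space M. T1 (\<lambda>l. X l w)} / card I"
    proof (intro sym_equal[OF I] gT1)
      fix i' x assume i': "i' \<in> I"
      have \<sigma>: "Transposition.transpose i' i permutes {1..K}"
        using i i' JK by (intro permutes_swap_id) (auto simp: I_def)
      show "T1 (x \<circ> Transposition.transpose i' i) = T1 x"
        unfolding T1_def comp_def using ball_perm[OF \<sigma>, of "\<lambda>l. x l \<le> c1"] by simp
    qed (use i JK I_def in auto)
    finally show ?thesis using PT1 by (simp add: I_def)
  qed
  have p: "?p i = ?p K" if i: "i \<in> {Suc J..K}" for i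
  proof (rule swap_eq[OF I])
    fix x
    have \<sigma>: "Transposition.transpose i K permutes {Suc J..K}"
      using i JK by (intro permutes_swap_id) auto
    have fix1: "Transposition.transpose i K l = l" if "l \<in> {1..J}" for l
      using permutes_not_in[OF \<sigma>] that by auto
    show "T (x \<circ> Transposition.transpose i K) = T x"
      unfolding T_def comp_def using ball_perm[OF \<sigma>, of "\<lambda>l. x l \<le> c2"] fix1 by simp
  qed (use i JK gT I_def in auto)
  have "(\<Sum>i\<in>I. ?p i) = prob {w\<in>space M. T (\<lambda>l. X l w)}"
    using I JK by (intro part[OF I(1,3) _ _ _ gT]) auto
  moreover have "(\<Sum>i\<in>I. ?p i) = (\<Sum>i\<in>{1..J}. ?p i) + (\<Sum>i\<in>{Suc J..K}. ?p i)"
  proof -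
    have "I = {1..J} \<union> {Suc J..K}" using JK by (auto simp: I_def)
    thus ?thesis by (simp add: sum.union_disjoint ivl_disj_int)
  qed
  moreover have "(\<Sum>i\<in>{1..J}. ?p i) = J * (F c1 ^ K / K)"
  proof -
    have "(\<Sum>i\<in>{1..J}. ?p i) = (\<Sum>i\<in>{1..J}. F c1 ^ K / K)" by (intro sum.cong refl q)
    thus ?thesis by simp
  qed
  moreover have "(\<Sum>i\<in>{Suc J..K}. ?p i) = (K - J) * ?p K"
  proof -
    have "(\<Sum>i\<in>{Suc J..K}. ?p i) = (\<Sum>i\<in>{Suc J..K}. ?p K)" by (intro sum.cong refl p)
    thus ?thesis by simp
  qed
  ultimately have h: "real (K - J) * ?p K = F c1 ^ J * F c2 ^ (K - J) - J * F c1 ^ K / K"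
    using PT by simp
  have dpos: "real (K - J) \<noteq> 0" using JK by simp
  have pK: "?p K = (F c1 ^ J * F c2 ^ (K - J) - J * F c1 ^ K / K) / real (K - J)"
    using h dpos by (simp add: eq_divide_eq mult.commute)
  have "prob {w\<in>space M. (\<lambda>x. T x \<and> amax I K x) (\<lambda>l. X l w) \<and> amax {1..J} J (\<lambda>l. X l w)}
      = prob {w\<in>space M. (\<lambda>x. T x \<and> amax I K x) (\<lambda>l. X l w)} / card {1..J}"
  proof (intro sym_equal[OF I] good_conj[OF gT] good_amax)
    fix i x assume i: "i \<in> {1..J}"
    have \<sigma>: "Transposition.transpose i J permutes {1..J}" using i JK by (intro permutes_swap_id) auto
    have \<sigma>I: "Transposition.transpose i J permutes I"
      using permutes_subset[OF \<sigma>] JK by (auto simp: I_def)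
    have fix2: "Transposition.transpose i J l = l" if "l \<in> {Suc J..K}" for l
      using permutes_not_in[OF \<sigma>] that by auto
    have "Transposition.transpose i J K = K" using i JK by auto
    hence "amax I K (x \<circ> Transposition.transpose i J) = amax I K x"
      using amax_perm[OF \<sigma>I] by simp
    moreover have "T (x \<circ> Transposition.transpose i J) = T x"
      unfolding T_def comp_def using ball_perm[OF \<sigma>, of "\<lambda>l. x l \<le> c1"] fix2 by simp
    ultimately show "T (x \<circ> Transposition.transpose i J) \<and> amax I K (x \<circ> Transposition.transpose i J)
        \<longleftrightarrow> T x \<and> amax I K x" by simp
  qed (use JK I_def in auto)
  thus ?thesis using pK unfolding T_def I_def by (simp add: conj_assoc)
qed

lemma rec_amax: "is_record X J w \<longleftrightarrow> amax {1..J} J (\<lambda>l. X l w)"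
  unfolding is_record_def amax_def by (auto simp: atLeastLessThan_def atLeastAtMost_def)

lemma evt:
  assumes JK: "1 \<le> J" "J < K" and c: "c1 \<le> c2"
  shows "{w\<in>space M. X J w \<le> c1 \<and> X K w \<le> c2 \<and> is_record X J w \<and> is_record X K w}
    = {w\<in>space M. ((\<forall>l\<in>{1..J}. X l w \<le> c1) \<and> (\<forall>l\<in>{Suc J..K}. X l w \<le> c2))
              \<and> amax {1..K} K (\<lambda>l. X l w) \<and> amax {1..J} J (\<lambda>l. X l w)}"
proof -
  have "(X J w \<le> c1 \<and> X K w \<le> c2 \<and> is_record X J w \<and> is_record X K w) \<longleftrightarrow>
    (((\<forall>l\<in>{1..J}. X l w \<le> c1) \<and> (\<forall>l\<in>{Suc J..K}. X l w \<le> c2))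
              \<and> amax {1..K} K (\<lambda>l. X l w) \<and> amax {1..J} J (\<lambda>l. X l w))" for w
  proof (intro iffI; (elim conjE)?)
  assume h: "X J w \<le> c1" "X K w \<le> c2" "is_record X J w" "is_record X K w"
  have a1: "amax {1..J} J (\<lambda>l. X l w)" "amax {1..K} K (\<lambda>l. X l w)" using h rec_amax by auto
  have "X l w \<le> c1" if "l \<in> {1..J}" for l
  proof (cases "l = J")
    case False
    hence "X l w < X J w" using a1(1) that unfolding amax_def by auto
    thus ?thesis using h(1) by simp
  qed (use h in simp)
  moreover have "X l w \<le> c2" if "l \<in> {Suc J..K}" for l
  proof (cases "l = K")
    case False
    hence "X l w < X K w" using a1(2) that JK unfolding amax_def by auto
    thus ?thesis using h(2) by simp
  qed (use h in simp)
  ultimately show "((\<forall>l\<in>{1..J}. X l w \<le> c1) \<and> (\<forall>l\<in>{Suc J..K}. X l w \<le> c2))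
              \<and> amax {1..K} K (\<lambda>l. X l w) \<and> amax {1..J} J (\<lambda>l. X l w)" using a1 by auto
next
  assume h: "\<forall>l\<in>{1..J}. X l w \<le> c1" "\<forall>l\<in>{Suc J..K}. X l w \<le> c2"
    "amax {1..K} K (\<lambda>l. X l w)" "amax {1..J} J (\<lambda>l. X l w)"
  thus "X J w \<le> c1 \<and> X K w \<le> c2 \<and> is_record X J w \<and> is_record X K w"
    using JK rec_amax by auto
qed
  thus ?thesis by simp
qed

lemma ratio:
  assumes JK: "1 \<le> J" "J < K"
  shows "prob {w\<in>space M. X J w \<le> c1 \<and> X K w \<le> c2 \<and> is_record X J w \<and> is_record X K w}
       / prob {w\<in>space M. is_record X J w \<and> is_record X K w}
     = (if c1 < c2 then (K * F c1 ^ J * F c2 ^ (K - J) - J * F c1 ^ K) / real (K - J) else F c2 ^ K)"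
proof -
  have dn: "prob {w\<in>space M. is_record X J w \<and> is_record X K w} = 1 / (real J * real K)"
    using den[OF JK] by (simp add: rec_amax conj_commute)
  have Kpos: "real K > 0" "real J > 0" "real (K - J) > 0" using JK by auto
  show ?thesis
  proof (cases "c1 < c2")
    case True
    have "prob {w\<in>space M. X J w \<le> c1 \<and> X K w \<le> c2 \<and> is_record X J w \<and> is_record X K w}
      = (F c1 ^ J * F c2 ^ (K - J) - J * F c1 ^ K / K) / (real (K - J) * J)"
      using evt[OF JK, of c1 c2] num[OF JK, of c1 c2] True by simp
    thus ?thesis using True dn alg[OF Kpos(2,1,3), of "F c1 ^ J * F c2 ^ (K - J)" "F c1 ^ K"]
      by (simp add: mult.assoc)
  next
    case False
    have "{w\<in>space M. X J w \<le> c1 \<and> X K w \<le> c2 \<and> is_record X J w \<and> is_record X K w}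
       = {w\<in>space M. X J w \<le> c2 \<and> X K w \<le> c2 \<and> is_record X J w \<and> is_record X K w}"
    proof -
      have pt: "(X J w \<le> c1 \<and> X K w \<le> c2 \<and> is_record X J w \<and> is_record X K w) =
            (X J w \<le> c2 \<and> X K w \<le> c2 \<and> is_record X J w \<and> is_record X K w)" for w
      proof -
        have "X J w < X K w" if "is_record X K w" using that JK unfolding is_record_def by auto
        thus ?thesis using False by auto
      qed
      show ?thesis by (simp only: pt)
    qed
    hence "prob {w\<in>space M. X J w \<le> c1 \<and> X K w \<le> c2 \<and> is_record X J w \<and> is_record X K w}
      = (F c2 ^ J * F c2 ^ (K - J) - J * F c2 ^ K / K) / (real (K - J) * J)"
      using evt[OF JK, of c2 c2] num[OF JK, of c2 c2] by simp
    moreover have "F c2 ^ J * F c2 ^ (K - J) = F c2 ^ K"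
    proof -
      have "J + (K - J) = K" using JK by simp
      thus ?thesis by (metis power_add)
    qed
    moreover have "real (K - J) = real K - real J" using JK by (simp add: of_nat_diff)
    ultimately show ?thesis using False dn alg2[OF Kpos(2,1,3), of "F c2 ^ K"] by simp
  qed
qed

end


lemma alg3: fixes A B j k d n :: real assumes "n > 0" "d > 0"
  shows "(k / n) / (d / n) * A - (j / n) / (d / n) * B = (k*A - j*B) / d"
  using assms by (simp add: field_simps)

lemma pow_lim:
  fixes u :: "nat \<Rightarrow> real" and m :: "nat \<Rightarrow> nat"
  assumes u: "\<And>n. 0 \<le> u n" and lim: "(\<lambda>n. u n ^ n) \<longlonglongrightarrow> g"
    and ml: "(\<lambda>n. real (m n) / real n) \<longlonglongrightarrow> l" and l: "l > 0"
  shows "(\<lambda>n. u n ^ m n) \<longlonglongrightarrow> g powr l"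
proof -
  have e1: "eventually (\<lambda>n. real (m n) / real n > 0) sequentially"
    using ml l by (rule order_tendstoD)
  have e2: "eventually (\<lambda>n. n > 0) sequentially" by (rule eventually_gt_at_top)
  have ev: "eventually (\<lambda>n. (u n ^ n) powr (real (m n) / real n) = u n ^ m n) sequentially"
    using e1 e2
  proof eventually_elim
    case (elim n)
    hence mpos: "m n > 0" by (auto simp: zero_less_divide_iff)
    show ?case
    proof (cases "u n = 0")
      case True thus ?thesis using mpos elim by (simp add: power_0_left)
    next
      case False
      hence up: "u n > 0" using u[of n] by simp
      have "(u n ^ n) powr (real (m n) / real n) = (u n powr real n) powr (real (m n) / real n)"
        using up by (simp add: powr_realpow)
      also have "\<dots> = u n powr (real (m n))" using elim by (simp add: powr_powr)
      also have "\<dots> = u n ^ m n" using up by (simp add: powr_realpow)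
      finally show ?thesis .
    qed
  qed
  have "(\<lambda>n. (u n ^ n) powr (real (m n) / real n)) \<longlonglongrightarrow> g powr l"
    using lim ml l u by (intro tendsto_powr') auto
  thus ?thesis using ev by (rule Lim_transform_eventually)
qed


theorem corollary10:
  fixes M :: "'a measure" and X :: "nat \<Rightarrow> 'a \<Rightarrow> real" and F G :: "real \<Rightarrow> real"
    and a b :: "nat \<Rightarrow> real" and j k :: "nat \<Rightarrow> nat" and l1 l2 y1 y2 :: real
  assumes "prob_space M"
    and "\<And>i. i \<ge> 1 \<Longrightarrow> X i \<in> borel_measurable M"
    and "prob_space.indep_vars M (\<lambda>_. borel) X {1..}"
    and "\<And>i x. i \<ge> 1 \<Longrightarrow> F x = measure M {w \<in> space M. X i w \<le> x}"
    and "continuous_on UNIV F"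
    and "max_domain_attr F G a b"
    and "\<And>n. 1 \<le> j n" and "\<And>n. j n < k n"
    and "(\<lambda>n. real (j n) / real n) \<longlonglongrightarrow> l1" and "l1 > 0"
    and "(\<lambda>n. real (k n) / real n) \<longlonglongrightarrow> l2" and "l2 > l1"
  shows "(\<lambda>n. measure M {w \<in> space M. (X (j n) w - b n) / a n \<le> y1 \<and> (X (k n) w - b n) / a n \<le> y2
                  \<and> is_record X (j n) w \<and> is_record X (k n) w}
            / measure M {w \<in> space M. is_record X (j n) w \<and> is_record X (k n) w})
         \<longlonglongrightarrow> G_lam G l1 l2 y1 y2"
proof -
  interpret R: recsetup M X F
    using assms(1-5) unfolding recsetup_def recsetup_axioms_def by auto
  have apos: "\<And>n. a n > 0" and conv: "\<And>x. (\<lambda>n. F (a n * x + b n) ^ n) \<longlonglongrightarrow> G x"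
    using assms(6) unfolding max_domain_attr_def by auto
  have F01: "0 \<le> F x" for x using assms(4)[of 1 x] by simp
  define u1 where "u1 n = F (a n * y1 + b n)" for n
  define u2 where "u2 n = F (a n * y2 + b n)" for n
  have u1: "\<And>n. 0 \<le> u1 n" and u2: "\<And>n. 0 \<le> u2 n" using F01 by (auto simp: u1_def u2_def)
  have c1: "(\<lambda>n. u1 n ^ n) \<longlonglongrightarrow> G y1" and c2: "(\<lambda>n. u2 n ^ n) \<longlonglongrightarrow> G y2"
    using conv by (auto simp: u1_def u2_def)
  have g1: "G y1 \<ge> 0" using c1 u1 by (intro LIMSEQ_le_const[OF c1]) auto
  have g2: "G y2 \<ge> 0" using c2 u2 by (intro LIMSEQ_le_const[OF c2]) auto
  have eq: "measure M {w \<in> space M. (X (j n) w - b n) / a n \<le> y1 \<and> (X (k n) w - b n) / a n \<le> y2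
                  \<and> is_record X (j n) w \<and> is_record X (k n) w}
            / measure M {w \<in> space M. is_record X (j n) w \<and> is_record X (k n) w}
      = (if a n * y1 + b n < a n * y2 + b n
         then (k n * u1 n ^ j n * u2 n ^ (k n - j n) - j n * u1 n ^ k n) / real (k n - j n)
         else u2 n ^ k n)" for n
  proof -
    have "\<And>x y. (x - b n) / a n \<le> y \<longleftrightarrow> x \<le> a n * y + b n"
      using apos[of n] by (simp add: pos_divide_le_eq algebra_simps)
    thus ?thesis using R.ratio[OF assms(7)[of n] assms(8)[of n], of "a n * y1 + b n" "a n * y2 + b n"]
      by (simp add: u1_def u2_def)
  qed
  have ld: "(\<lambda>n. real (k n - j n) / real n) \<longlonglongrightarrow> l2 - l1"
  proof -
    have "(\<lambda>n. real (k n) / real n - real (j n) / real n) \<longlonglongrightarrow> l2 - l1"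
      using assms(9,11) by (intro tendsto_intros)
    moreover have "real (k n - j n) / real n = real (k n) / real n - real (j n) / real n" for n
      using assms(8)[of n] by (simp add: of_nat_diff diff_divide_distrib)
    ultimately show ?thesis by simp
  qed
  show ?thesis
  proof (cases "y1 < y2")
    case False
    hence "\<not> (a n * y1 + b n < a n * y2 + b n)" for n using apos[of n]
      by (simp add: mult_le_cancel_left_pos not_less)
    hence "(\<lambda>n. measure M {w \<in> space M. (X (j n) w - b n) / a n \<le> y1 \<and> (X (k n) w - b n) / a n \<le> y2
                  \<and> is_record X (j n) w \<and> is_record X (k n) w}
            / measure M {w \<in> space M. is_record X (j n) w \<and> is_record X (k n) w}) = (\<lambda>n. u2 n ^ k n)"
      using eq by auto
    moreover have "(\<lambda>n. u2 n ^ k n) \<longlonglongrightarrow> G y2 powr l2"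
      using assms(10,11,12) by (intro pow_lim[OF u2 c2]) auto
    ultimately show ?thesis using False by (simp add: G_lam_def)
  next
    case True
    hence lt: "a n * y1 + b n < a n * y2 + b n" for n using apos[of n] by simp
    have ev: "eventually (\<lambda>n. (real (k n) / real n) / (real (k n - j n) / real n) * u1 n ^ j n * u2 n ^ (k n - j n)
              - (real (j n) / real n) / (real (k n - j n) / real n) * u1 n ^ k n
           = (k n * u1 n ^ j n * u2 n ^ (k n - j n) - j n * u1 n ^ k n) / real (k n - j n)) sequentially"
      using eventually_gt_at_top[of 0]
    proof eventually_elim
      case (elim n)
      have d: "real (k n - j n) > 0" using assms(8)[of n] by simp
      have nn: "real n > 0" using elim by simp
      show ?case
        using alg3[OF nn d, where k="real (k n)" and j="real (j n)"
            and A="u1 n ^ j n * u2 n ^ (k n - j n)" and B="u1 n ^ k n"]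
        by (simp add: mult.assoc)
    qed
    have t1: "(\<lambda>n. u1 n ^ j n) \<longlonglongrightarrow> G y1 powr l1" using assms(9,10) by (intro pow_lim[OF u1 c1])
    have t2: "(\<lambda>n. u2 n ^ (k n - j n)) \<longlonglongrightarrow> G y2 powr (l2 - l1)" using ld assms(12) by (intro pow_lim[OF u2 c2]) auto
    have t3: "(\<lambda>n. u1 n ^ k n) \<longlonglongrightarrow> G y1 powr l2" using assms(10,11,12) by (intro pow_lim[OF u1 c1]) auto
    have "(\<lambda>n. (real (k n) / real n) / (real (k n - j n) / real n) * u1 n ^ j n * u2 n ^ (k n - j n)
              - (real (j n) / real n) / (real (k n - j n) / real n) * u1 n ^ k n)
        \<longlonglongrightarrow> l2 / (l2 - l1) * G y1 powr l1 * G y2 powr (l2 - l1) - l1 / (l2 - l1) * G y1 powr l2"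
      using assms(9,11,12) ld t1 t2 t3 by (intro tendsto_intros) auto
    hence lim: "(\<lambda>n. (k n * u1 n ^ j n * u2 n ^ (k n - j n) - j n * u1 n ^ k n) / real (k n - j n))
        \<longlonglongrightarrow> l2 / (l2 - l1) * G y1 powr l1 * G y2 powr (l2 - l1) - l1 / (l2 - l1) * G y1 powr l2"
      using ev by (rule Lim_transform_eventually)
    have "G y1 powr l2 = G y1 powr l1 * G y1 powr (l2 - l1)" by (simp add: powr_add[symmetric])
    hence gl: "G_lam G l1 l2 y1 y2 = l2 / (l2 - l1) * G y1 powr l1 * G y2 powr (l2 - l1) - l1 / (l2 - l1) * G y1 powr l2"
      using True by (simp add: G_lam_def Let_def algebra_simps)
    show ?thesis using lim eq lt gl by simp
  qed
qed

end
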